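(* Let $(L,\wedge,\vee,0,1)$ be a bounded lattice with additive Nakano mosaic $(L,\boxplus,0)$, where $x\boxplus y:=\{z\in L\mid x\vee y=x\vee z=z\vee y\}$. Then $(x\boxplus x)\boxplus(x\boxplus x)=x\boxplus x$ for all $x\in L$.
   Context: For subsets $X,Y\subseteq L$, $X\boxplus Y:=\bigcup_{u\in X,v\in Y}u\boxplus v$. *)

theory Defs
  imports Main
begin

definition nakano_add :: "'a::bounded_lattice \<Rightarrow> 'a \<Rightarrow> 'a set" where
  "nakano_add x y = {z. sup x y = sup x z \<and> sup x z = sup z y}"

definition nakano_add_set :: "'a::bounded_lattice set \<Rightarrow> 'a set \<Rightarrow> 'a set" where
  "nakano_add_set X Y = (\<Union>u\<in>X. \<Union>v\<in>Y. nakano_add u v)"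

end

theory Submission
  imports Defs
begin

lemma nx: "nakano_add x x = {z. z \<le> (x::'a::bounded_lattice)}"
  unfolding nakano_add_def by (auto simp: sup_commute sup_absorb1 le_iff_sup)

theorem mainTheorem14:
  fixes x :: "'a::bounded_lattice"
  shows "nakano_add_set (nakano_add x x) (nakano_add x x) = nakano_add x x"
proof
  show "nakano_add_set (nakano_add x x) (nakano_add x x) \<subseteq> nakano_add x x"
  proof
    fix z assume "z \<in> nakano_add_set (nakano_add x x) (nakano_add x x)"
    then obtain u v where "u \<le> x" "v \<le> x" "sup u v = sup u z"
      unfolding nakano_add_set_def nx by (auto simp: nakano_add_def)
    then have "z \<le> sup u v" by (metis sup_ge2)
    also have "\<dots> \<le> x" using \<open>u \<le> x\<close> \<open>v \<le> x\<close> by simp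
    finally show "z \<in> nakano_add x x" by (simp add: nx)
  qed
next
  show "nakano_add x x \<subseteq> nakano_add_set (nakano_add x x) (nakano_add x x)"
  proof
    fix z assume "z \<in> nakano_add x x"
    moreover have "z \<in> nakano_add z z" by (simp add: nx)
    ultimately show "z \<in> nakano_add_set (nakano_add x x) (nakano_add x x)"
      unfolding nakano_add_set_def by blast
  qed
qed

end
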